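(* Let $X$ be a Hausdorff, locally compact, arc connected space with at least two points, let $a\in X$, let $\mathcal I$ be an ideal on $X$, and let $\alpha$ be an infinite cardinal. Then $$\mathfrak P^\alpha_{\mathcal I}(X,a)=\{[f]: f:[0,1]\to X \text{ is an } \alpha\tfrac{\mathcal I}{}\text{loop with base point } a\},$$ i.e. the set of homotopy classes of $\alpha\frac{\mathcal I}{}$loops at $a$ is already a subgroup of $\pi_1(X,a)$.
   Context: A space is arc connected if any two distinct points $p,q$ are joined by a continuous injective map $h:[0,1]\to X$ with $h(0)=p$, $h(1)=q$. An ideal on a set $X$ is a nonempty family $\mathcal I$ of subsets of $X$ closed under finite unions and under taking subsets. For a nonzero cardinal $\alpha$ and an ideal $\mathcal I$ on $X$, a continuous map $f:Z\to X$ is an $\alpha\frac{\mathcal I}{}$map if there is $A\in\mathcal I$ such that for every $x\in X\setminus A$ one has $|f^{-1}(x)|\le\alpha$ when $\alpha$ is finite, and $|f^{-1}(x)|<\alpha$ when $\alpha$ is infinite. An $\alpha\frac{\mathcal I}{}$loop with base point $a$ is an $\alpha\frac{\mathcal I}{}$map $f:[0,1]\to X$ with $f(0)=f(1)=a$. $[f]$ denotes the homotopy class (rel endpoints) of a loop $f$, and $\mathfrak P^\alpha_{\mathcal I}(X,a)$ denotes the subgroup of $\pi_1(X,a)$ generated by the classes of all $\alpha\frac{\mathcal I}{}$loops with base point $a$. *)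

theory Defs
  imports "HOL-Analysis.Analysis" "HOL-Library.Equipollence" "HOL-Algebra.Generated_Groups"
begin

definition arc_connected_space :: "'a topology \<Rightarrow> bool" where
  "arc_connected_space X \<longleftrightarrow>
     (\<forall>p \<in> topspace X. \<forall>q \<in> topspace X. p \<noteq> q \<longrightarrow>
        (\<exists>h. pathin X h \<and> inj_on h {0..1} \<and> h 0 = p \<and> h 1 = q))"

definition ideal_on :: "'a set \<Rightarrow> 'a set set \<Rightarrow> bool" where
  "ideal_on S I \<longleftrightarrow> I \<noteq> {} \<and> (\<forall>A \<in> I. A \<subseteq> S) \<and>
     (\<forall>A \<in> I. \<forall>B \<in> I. A \<union> B \<in> I) \<and> (\<forall>A \<in> I. \<forall>B. B \<subseteq> A \<longrightarrow> B \<in> I)"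

text \<open>An alpha-I-map [0,1] -> X for an infinite cardinal alpha, where alpha is
  represented as the cardinality of a set K: all fibres outside some A in I
  have cardinality strictly less than |K|.\<close>
definition alpha_I_map_inf :: "'k set \<Rightarrow> 'a set set \<Rightarrow> 'a topology \<Rightarrow> (real \<Rightarrow> 'a) \<Rightarrow> bool" where
  "alpha_I_map_inf K I X f \<longleftrightarrow> pathin X f \<and>
     (\<exists>A \<in> I. \<forall>x \<in> topspace X - A. {t \<in> {0..1}. f t = x} \<prec> K)"

definition loop_at :: "'a topology \<Rightarrow> 'a \<Rightarrow> (real \<Rightarrow> 'a) \<Rightarrow> bool" where
  "loop_at X a f \<longleftrightarrow> pathin X f \<and> f 0 = a \<and> f 1 = a"

definition alpha_I_loop_inf :: "'k set \<Rightarrow> 'a set set \<Rightarrow> 'a topology \<Rightarrow> 'a \<Rightarrow> (real \<Rightarrow> 'a) \<Rightarrow> bool" where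
  "alpha_I_loop_inf K I X a f \<longleftrightarrow> alpha_I_map_inf K I X f \<and> f 0 = a \<and> f 1 = a"

definition loop_class :: "'a topology \<Rightarrow> 'a \<Rightarrow> (real \<Rightarrow> 'a) \<Rightarrow> (real \<Rightarrow> 'a) set" where
  "loop_class X a f = {g. loop_at X a g \<and>
     homotopic_with (\<lambda>h. h 0 = a \<and> h 1 = a) (top_of_set {0..1}) X f g}"

text \<open>Path concatenation (same formula as the library's joinpaths, for an arbitrary carrier type).\<close>
definition concat_path :: "(real \<Rightarrow> 'a) \<Rightarrow> (real \<Rightarrow> 'a) \<Rightarrow> real \<Rightarrow> 'a" where
  "concat_path f g = (\<lambda>t. if t \<le> 1/2 then f (2 * t) else g (2 * t - 1))"

definition fundamental_group :: "'a topology \<Rightarrow> 'a \<Rightarrow> (real \<Rightarrow> 'a) set monoid" where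
  "fundamental_group X a =
     \<lparr> carrier = {loop_class X a f | f. loop_at X a f},
       mult = (\<lambda>c d. \<Union>{loop_class X a (concat_path f g) | f g. f \<in> c \<and> g \<in> d}),
       one = loop_class X a (\<lambda>t. a) \<rparr>"

definition P_alpha_I :: "'k set \<Rightarrow> 'a set set \<Rightarrow> 'a topology \<Rightarrow> 'a \<Rightarrow> (real \<Rightarrow> 'a) set set" where
  "P_alpha_I K I X a = generate (fundamental_group X a)
     {loop_class X a f | f. alpha_I_loop_inf K I X a f}"

end

theory Submission
  imports Defs
begin

lemma lesspoll_ordLess: "A \<prec> B \<longleftrightarrow> ordLess2 (card_of A) (card_of B)"
  unfolding lesspoll_def lepoll_def eqpoll_iff_card_of_ordIso
  by (metis card_of_ordLeq ordLeq_iff_ordLess_or_ordIso not_ordLess_ordIso)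

lemma Un_lesspoll_infinite:
  assumes "infinite K" "A \<prec> K" "B \<prec> K" shows "A \<union> B \<prec> K"
  using assms card_of_Un_ordLess_infinite lesspoll_ordLess by blast

abbreviation hp :: "'a topology \<Rightarrow> 'a \<Rightarrow> (real \<Rightarrow> 'a) \<Rightarrow> (real \<Rightarrow> 'a) \<Rightarrow> bool" where
  "hp X a f g \<equiv> homotopic_with (\<lambda>h. h 0 = a \<and> h 1 = a) (top_of_set {0..1}) X f g"

lemma reparam:
  assumes f: "pathin X f" and phi: "path \<phi>" "\<phi> ` {0..1} \<subseteq> {0..1}"
    and psi: "path \<psi>" "\<psi> ` {0..1} \<subseteq> {0..1}"
    and e: "\<psi> 0 = \<phi> 0" "\<psi> 1 = \<phi> 1" "f (\<phi> 0) = a" "f (\<phi> 1) = a"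
  shows "hp X a (f \<circ> \<phi>) (f \<circ> \<psi>)"
proof -
  have "homotopic_paths {0..1} \<phi> \<psi>"
  proof (rule homotopic_paths_linear)
    fix t :: real assume "t \<in> {0..1}"
    then have "\<phi> t \<in> {0..1}" "\<psi> t \<in> {0..1}" using phi(2) psi(2) by (auto simp: image_subset_iff)
    then show "closed_segment (\<phi> t) (\<psi> t) \<subseteq> {0..1}"
      by (simp add: closed_segment_subset)
  qed (use phi psi e in \<open>auto simp: pathstart_def pathfinish_def\<close>)
  then show ?thesis
    unfolding homotopic_paths_def
    apply (rule homotopic_with_compose_continuous_map_left)
    using f e by (auto simp: pathin_def pathstart_def pathfinish_def)
qed

lemma concat_cong:
  assumes h1: "hp X a f f'" and h2: "hp X a g g'"
  shows "hp X a (concat_path f g) (concat_path f' g')"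
proof -
  let ?X01 = "prod_topology (top_of_set {0..1::real}) (top_of_set {0..1::real})"
  obtain k1 where contk1: "continuous_map ?X01 X k1" and k1: "\<forall>x. k1 (0, x) = f x" "\<forall>x. k1 (1, x) = f' x"
     and P1: "\<forall>t\<in>{0..1}. k1 (t,0) = a \<and> k1 (t,1) = a"
    using h1 by (auto simp: homotopic_with_def)
  obtain k2 where contk2: "continuous_map ?X01 X k2" and k2: "\<forall>x. k2 (0, x) = g x" "\<forall>x. k2 (1, x) = g' x"
     and P2: "\<forall>t\<in>{0..1}. k2 (t,0) = a \<and> k2 (t,1) = a"
    using h2 by (auto simp: homotopic_with_def)
  define k where "k \<equiv> \<lambda>y. if snd y \<le> 1/2 then (k1 \<circ> (\<lambda>x. (fst x, 2 * snd x))) y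
                      else (k2 \<circ> (\<lambda>x. (fst x, 2 * snd x - 1))) y"
  show ?thesis unfolding homotopic_with_def
  proof (intro exI conjI)
    show "continuous_map ?X01 X k" unfolding k_def
    proof (rule continuous_map_cases_le)
      show snd: "continuous_map ?X01 euclideanreal snd"
        using continuous_map_snd continuous_map_in_subtopology by blast
      have fst: "continuous_map ?X01 euclideanreal fst"
        using continuous_map_fst continuous_map_in_subtopology by blast
      show "continuous_map ?X01 euclideanreal (\<lambda>x. 1/2)"
        by simp
      show "continuous_map (subtopology ?X01 {y \<in> topspace ?X01. snd y \<le> 1/2}) X
               (k1 \<circ> (\<lambda>x. (fst x, 2 * snd x)))"
        apply (intro fst snd continuous_map_compose [OF _ contk1] continuous_intros continuous_map_into_subtopology continuous_map_from_subtopology | simp)+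
        by (force simp: prod_topology_subtopology)
      show "continuous_map (subtopology ?X01 {y \<in> topspace ?X01. 1/2 \<le> snd y}) X
               (k2 \<circ> (\<lambda>x. (fst x, 2 * snd x - 1)))"
        apply (intro fst snd continuous_map_compose [OF _ contk2] continuous_intros continuous_map_into_subtopology continuous_map_from_subtopology | simp)+
        by (force simp: prod_topology_subtopology)
      show "(k1 \<circ> (\<lambda>x. (fst x, 2 * snd x))) y = (k2 \<circ> (\<lambda>x. (fst x, 2 * snd x - 1))) y"
        if "y \<in> topspace ?X01" and "snd y = 1/2" for y
      proof -
        obtain s t where y: "y = (s,t)" by fastforce
        with that have "s \<in> {0..1}" "2*t = 1" "2*t - 1 = 0" by auto
        then show ?thesis using P1 P2 y by simp
      qed
    qed
    show "\<forall>x. k (0, x) = concat_path f g x"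
      by (simp add: k_def concat_path_def k1 k2)
    show "\<forall>x. k (1, x) = concat_path f' g' x"
      by (simp add: k_def concat_path_def k1 k2)
    show "\<forall>t\<in>{0..1}. (\<lambda>x. k (t, x)) 0 = a \<and> (\<lambda>x. k (t, x)) 1 = a"
      by (simp add: k_def P1 P2)
  qed
qed

lemma hp_pathin: "hp X a f g \<Longrightarrow> pathin X f \<and> pathin X g"
  unfolding pathin_def using homotopic_with_imp_continuous_maps by blast

lemma hp_ends: "hp X a f g \<Longrightarrow> f 0 = a \<and> f 1 = a \<and> g 0 = a \<and> g 1 = a"
  using homotopic_with_imp_property by blast

lemma hp_refl: "loop_at X a f \<Longrightarrow> hp X a f f"
  by (simp add: loop_at_def pathin_def)

lemma hp_loop: assumes h: "hp X a f g" shows "loop_at X a f \<and> loop_at X a g"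
  using hp_pathin[OF h] hp_ends[OF h] by (simp add: loop_at_def)

lemma hp_sym: "hp X a f g \<Longrightarrow> hp X a g f"
  by (rule homotopic_with_symD)

lemma hp_trans: "hp X a f g \<Longrightarrow> hp X a g h \<Longrightarrow> hp X a f h"
  by (rule homotopic_with_trans)

lemma concat_loop: assumes "loop_at X a f" "loop_at X a g" shows "loop_at X a (concat_path f g)"
proof -
  have "hp X a (concat_path f g) (concat_path f g)"
    by (rule concat_cong[OF hp_refl hp_refl]) (fact assms)+
  then show ?thesis by (rule hp_loop[THEN conjunct1])
qed

lemma path_max: "path (\<lambda>t::real. max 0 (2*t-1))" and path_min: "path (\<lambda>t::real. min 1 (2*t))"
  and path_tent: "path (\<lambda>t::real. min (2*t) (2-2*t))" and path_id: "path (\<lambda>t::real. t)"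
  and path_zero: "path (\<lambda>t::real. 0)"
  and path_assoc: "path (\<lambda>t::real. min (min (2*t) (t+1/4)) ((t+1)/2))"
  unfolding path_def by (intro continuous_intros | simp)+
lemma lid: assumes "loop_at X a f" shows "hp X a (concat_path (\<lambda>t. a) f) f"
proof -
  have "hp X a (f \<circ> (\<lambda>t. max 0 (2*t-1))) (f \<circ> (\<lambda>t. t))"
    by (rule reparam) (use assms in \<open>auto simp: loop_at_def path_max path_id\<close>)
  moreover have "f \<circ> (\<lambda>t. max 0 (2*t-1)) = concat_path (\<lambda>t. a) f"
  proof
    fix t :: real show "(f \<circ> (\<lambda>t. max 0 (2*t-1))) t = concat_path (\<lambda>t. a) f t"
    proof -
      consider "t < 1/2" | "t = 1/2" | "t > 1/2" by linarith
      then show ?thesis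
      proof cases
        case 2
        then have "2*t - 1 = 0" "2*t = 1" by simp_all
        then show ?thesis using assms by (simp add: concat_path_def loop_at_def max_def)
      qed (use assms in \<open>auto simp: concat_path_def loop_at_def max_def\<close>)
    qed
  qed
  ultimately show ?thesis by (simp add: o_def)
qed

lemma rid: assumes "loop_at X a f" shows "hp X a (concat_path f (\<lambda>t. a)) f"
proof -
  have "hp X a (f \<circ> (\<lambda>t. min 1 (2*t))) (f \<circ> (\<lambda>t. t))"
    by (rule reparam) (use assms in \<open>auto simp: loop_at_def path_min path_id\<close>)
  moreover have "f \<circ> (\<lambda>t. min 1 (2*t)) = concat_path f (\<lambda>t. a)"
  proof
    fix t :: real show "(f \<circ> (\<lambda>t. min 1 (2*t))) t = concat_path f (\<lambda>t. a) t"
    proof -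
      consider "t < 1/2" | "t = 1/2" | "t > 1/2" by linarith
      then show ?thesis
      proof cases
        case 2
        then have "2*t - 1 = 0" "2*t = 1" by simp_all
        then show ?thesis using assms by (simp add: concat_path_def loop_at_def min_def)
      qed (use assms in \<open>auto simp: concat_path_def loop_at_def min_def\<close>)
    qed
  qed
  ultimately show ?thesis by (simp add: o_def)
qed

definition revp :: "(real \<Rightarrow> 'a) \<Rightarrow> real \<Rightarrow> 'a" where "revp f = (\<lambda>t. f (1 - t))"

lemma revp_revp[simp]: "revp (revp f) = f" by (simp add: revp_def)

lemma pathin_revp: "pathin X f \<Longrightarrow> pathin X (revp f)"
proof -
  have c: "continuous_map (top_of_set {0..1}) (top_of_set {0..1::real}) (\<lambda>t. 1 - t)"
    by (simp add: continuous_on_op_minus Pi_iff)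
  assume "pathin X f"
  then show ?thesis unfolding pathin_def revp_def
    using continuous_map_compose[OF c, of X f] by (simp add: o_def)
qed

lemma rinv: assumes "pathin X f" "f 0 = a" shows "hp X a (concat_path f (revp f)) (\<lambda>t. a)"
proof -
  have "hp X a (f \<circ> (\<lambda>t. min (2*t) (2-2*t))) (f \<circ> (\<lambda>t. 0))"
    by (rule reparam) (use assms in \<open>auto simp: path_tent path_zero\<close>)
  moreover have "f \<circ> (\<lambda>t. min (2*t) (2-2*t)) = concat_path f (revp f)"
    by (auto simp: concat_path_def revp_def min_def)
  ultimately show ?thesis using assms by (simp add: o_def)
qed

lemma assoc: assumes "loop_at X a f" "loop_at X a g" "loop_at X a h"
  shows "hp X a (concat_path (concat_path f g) h) (concat_path f (concat_path g h))"
proof -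
  let ?k = "concat_path f (concat_path g h)"
  let ?l = "concat_path (concat_path f g) h"
  let ?p = "\<lambda>t::real. min (min (2*t) (t+1/4)) ((t+1)/2)"
  have lk: "loop_at X a ?k" using concat_loop[OF assms(1) concat_loop[OF assms(2,3)]] .
  have l1: "loop_at X a ?l" using concat_loop[OF concat_loop[OF assms(1,2)] assms(3)] .
  have A: "hp X a (?k \<circ> ?p) (?k \<circ> (\<lambda>t. t))"
  proof (rule reparam)
    show "pathin X ?k" using lk by (simp add: loop_at_def)
    show "?p ` {0..1} \<subseteq> {0..1}" "(\<lambda>t. t) ` {0..1} \<subseteq> {0..1::real}"
      by (auto simp: min_le_iff_disj)
  qed (use lk in \<open>simp_all add: loop_at_def path_assoc path_id\<close>)
  have B: "hp X a ?l (?k \<circ> ?p)"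
  proof (rule homotopic_with_equal)
    show "continuous_map (top_of_set {0..1}) X ?l"
      using l1 by (simp add: loop_at_def pathin_def)
    show "?l 0 = a \<and> ?l 1 = a"
      using l1 by (simp add: loop_at_def)
    have "?p 0 = 0" "?p 1 = 1" by simp_all
    then show "(?k \<circ> ?p) 0 = a \<and> (?k \<circ> ?p) 1 = a"
      using lk by (simp add: loop_at_def)
    fix t assume "t \<in> topspace (top_of_set {0..1::real})"
    then have t: "0 \<le> t" "t \<le> 1" by auto
    show "?l t = (?k \<circ> ?p) t"
    proof (cases "t \<le> 1/4")
      case True
      then have "?p t = 2*t" by (simp add: min_def)
      moreover have "2*t \<le> 1/2" "t \<le> 1/2" using True by auto
      ultimately show ?thesis by (simp add: concat_path_def)
    next
      case False
      show ?thesis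
      proof (cases "t \<le> 1/2")
        case True
        then have p: "?p t = t + 1/4" using False by (simp add: min_def)
        have "\<not> 2*t \<le> 1/2" "t \<le> 1/2" "\<not> t + 1/4 \<le> 1/2" "2*(t+1/4) - 1 \<le> 1/2"
          "2*(2*(t+1/4) - 1) = 2*(2*t) - 1" using True False by (auto simp: algebra_simps)
        then show ?thesis using p by (simp add: concat_path_def)
      next
        case F2: False
        then have p: "?p t = (t+1)/2" using False by (simp add: min_def)
        have c: "\<not> t \<le> 1/2" "\<not> (t+1)/2 \<le> 1/2" "\<not> 2*((t+1)/2) - 1 \<le> 1/2"
          using F2 by (auto simp: algebra_simps)
        have arg: "2*(2*((t+1)/2) - 1) - 1 = 2*t - 1" by (simp add: field_simps)
        have "(?k \<circ> ?p) t = ?k ((t+1)/2)" by (simp only: o_def p)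
        also have "\<dots> = h (2*(2*((t+1)/2) - 1) - 1)"
          using c by (simp only: concat_path_def if_False)
        also have "\<dots> = h (2*t - 1)" by (simp only: arg)
        also have "\<dots> = ?l t" using c by (simp only: concat_path_def if_False)
        finally show ?thesis by (rule sym)
      qed
    qed
  qed
  have C: "?k \<circ> (\<lambda>t. t) = ?k" by (simp add: o_def)
  show ?thesis using hp_trans[OF B A] unfolding C .
qed

lemma loop_revp: "loop_at X a f \<Longrightarrow> loop_at X a (revp f)"
  by (simp add: loop_at_def pathin_revp) (simp add: revp_def)

lemma loop_const: "a \<in> topspace X \<Longrightarrow> loop_at X a (\<lambda>t. a)"
  by (simp add: loop_at_def)

lemma C1: assumes h: "hp X a f g" shows "loop_class X a f = loop_class X a g"
  unfolding loop_class_def using hp_trans[OF hp_sym[OF h]] hp_trans[OF h] by auto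

lemma C2: assumes "loop_at X a f" shows "f \<in> loop_class X a f"
  using assms hp_refl[OF assms] by (simp add: loop_class_def)

lemma C3: assumes "loop_at X a g" "loop_class X a f = loop_class X a g" shows "hp X a f g"
proof -
  have "g \<in> loop_class X a f" using C2[OF assms(1)] assms(2) by simp
  then show ?thesis by (simp add: loop_class_def)
qed

lemma M: assumes "loop_at X a f" "loop_at X a g"
  shows "loop_class X a f \<otimes>\<^bsub>fundamental_group X a\<^esub> loop_class X a g = loop_class X a (concat_path f g)"
proof -
  have "\<Union>{loop_class X a (concat_path f' g') | f' g'. f' \<in> loop_class X a f \<and> g' \<in> loop_class X a g}
        = loop_class X a (concat_path f g)" (is "\<Union>?U = ?R")
  proof
    show "\<Union>?U \<subseteq> ?R"
    proof
      fix x assume "x \<in> \<Union>?U"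
      then obtain f' g' where x: "x \<in> loop_class X a (concat_path f' g')"
        and f': "f' \<in> loop_class X a f" and g': "g' \<in> loop_class X a g" by blast
      from f' g' have "hp X a f f'" "hp X a g g'" by (auto simp: loop_class_def)
      then have "hp X a (concat_path f g) (concat_path f' g')" by (rule concat_cong)
      then have "loop_class X a (concat_path f g) = loop_class X a (concat_path f' g')" by (rule C1)
      then show "x \<in> ?R" using x by simp
    qed
    show "?R \<subseteq> \<Union>?U"
    proof
      fix x assume "x \<in> ?R"
      moreover have "?R \<in> ?U" using C2[OF assms(1)] C2[OF assms(2)] by blast
      ultimately show "x \<in> \<Union>?U" by (rule UnionI[rotated])
    qed
  qed
  then show ?thesis by (simp add: fundamental_group_def)
qed

lemma inv_class: assumes f: "loop_at X a f" and a: "a \<in> topspace X"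
  shows "inv\<^bsub>fundamental_group X a\<^esub> (loop_class X a f) = loop_class X a (revp f)"
proof -
  let ?G = "fundamental_group X a"
  have rf: "loop_at X a (revp f)" using f by (rule loop_revp)
  have one: "\<one>\<^bsub>?G\<^esub> = loop_class X a (\<lambda>t. a)" by (simp add: fundamental_group_def)
  have fa: "pathin X f" "f 0 = a" using f by (auto simp: loop_at_def)
  have rfa: "pathin X (revp f)" "revp f 0 = a" using rf by (auto simp: loop_at_def)
  show ?thesis
    unfolding m_inv_def
  proof (rule the_equality)
    show "loop_class X a (revp f) \<in> carrier ?G \<and>
      loop_class X a f \<otimes>\<^bsub>?G\<^esub> loop_class X a (revp f) = \<one>\<^bsub>?G\<^esub> \<and>
      loop_class X a (revp f) \<otimes>\<^bsub>?G\<^esub> loop_class X a f = \<one>\<^bsub>?G\<^esub>"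
    proof (intro conjI)
      show "loop_class X a (revp f) \<in> carrier ?G" using rf by (auto simp: fundamental_group_def)
      show "loop_class X a f \<otimes>\<^bsub>?G\<^esub> loop_class X a (revp f) = \<one>\<^bsub>?G\<^esub>"
        using M[OF f rf] C1[OF rinv[OF fa]] one by simp
      show "loop_class X a (revp f) \<otimes>\<^bsub>?G\<^esub> loop_class X a f = \<one>\<^bsub>?G\<^esub>"
        using M[OF rf f] C1[OF rinv[OF rfa]] one by simp
    qed
  next
    fix y assume y: "y \<in> carrier ?G \<and>
      loop_class X a f \<otimes>\<^bsub>?G\<^esub> y = \<one>\<^bsub>?G\<^esub> \<and> y \<otimes>\<^bsub>?G\<^esub> loop_class X a f = \<one>\<^bsub>?G\<^esub>"
    then have "y \<in> {loop_class X a f |f. loop_at X a f}" by (simp add: fundamental_group_def)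
    then obtain h where h: "loop_at X a h" and yh: "y = loop_class X a h" by blast
    have "loop_class X a (concat_path h f) = loop_class X a (\<lambda>t. a)"
      using y M[OF h f] one yh by simp
    then have hf: "hp X a (concat_path h f) (\<lambda>t. a)"
      by (rule C3[OF loop_const[OF a], rotated])
    have 1: "hp X a h (concat_path h (\<lambda>t. a))" by (rule hp_sym[OF rid[OF h]])
    have 2: "hp X a (concat_path h (\<lambda>t. a)) (concat_path h (concat_path f (revp f)))"
      by (rule concat_cong[OF hp_refl[OF h] hp_sym[OF rinv[OF fa]]])
    have 3: "hp X a (concat_path h (concat_path f (revp f))) (concat_path (concat_path h f) (revp f))"
      by (rule hp_sym[OF assoc[OF h f rf]])
    have 4: "hp X a (concat_path (concat_path h f) (revp f)) (concat_path (\<lambda>t. a) (revp f))"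
      by (rule concat_cong[OF hf hp_refl[OF rf]])
    have 5: "hp X a (concat_path (\<lambda>t. a) (revp f)) (revp f)" by (rule lid[OF rf])
    have "hp X a h (revp f)" by (rule hp_trans[OF 1 hp_trans[OF 2 hp_trans[OF 3 hp_trans[OF 4 5]]]])
    then have "loop_class X a h = loop_class X a (revp f)" by (rule C1)
    then show "y = loop_class X a (revp f)" using yh by simp
  qed
qed

lemma alpha_loop: "alpha_I_loop_inf K I X a f \<Longrightarrow> loop_at X a f"
  by (simp add: alpha_I_loop_inf_def alpha_I_map_inf_def loop_at_def)

lemma tent_fibre_finite:
  assumes inj: "inj_on h {0..1}"
  shows "finite {t\<in>{0..1::real}. h (min (2*t) (2-2*t)) = x}" (is "finite ?F")
proof (cases "?F = {}")
  case False
  then obtain t0 where t0: "t0 \<in> ?F" by blast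
  define s where "s = min (2*t0) (2-2*t0)"
  have rng: "min (2*t) (2-2*t) \<in> {0..1}" if "t \<in> {0..1}" for t :: real
    using that by (auto simp: min_def)
  have "?F \<subseteq> {s/2, 1 - s/2}"
  proof
    fix t assume t: "t \<in> ?F"
    then have "h (min (2*t) (2-2*t)) = h s" using t0 by (simp add: s_def)
    then have "min (2*t) (2-2*t) = s"
      using inj rng t t0 unfolding s_def by (auto dest: inj_onD)
    then show "t \<in> {s/2, 1 - s/2}" by (auto simp: min_def split: if_splits)
  qed
  then show ?thesis using finite_subset by blast
next
  case True
  show ?thesis unfolding True by simp
qed

lemma alpha_revp:
  assumes "alpha_I_loop_inf K I X a f"
  shows "alpha_I_loop_inf K I X a (revp f)"
proof -
  obtain A where A: "A \<in> I" and fib: "\<forall>x \<in> topspace X - A. {t \<in> {0..1}. f t = x} \<prec> K"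
    and p: "pathin X f" and e: "f 0 = a" "f 1 = a"
    using assms by (auto simp: alpha_I_loop_inf_def alpha_I_map_inf_def)
  have "{t \<in> {0..1}. revp f t = x} \<prec> K" if "x \<in> topspace X - A" for x
  proof -
    have "{t \<in> {0..1}. revp f t = x} \<subseteq> (\<lambda>t. 1 - t) ` {t \<in> {0..1}. f t = x}"
    proof
      fix t assume "t \<in> {t \<in> {0..1}. revp f t = x}"
      then have "1 - t \<in> {t \<in> {0..1}. f t = x}" "t = 1 - (1 - t)" by (auto simp: revp_def)
      then show "t \<in> (\<lambda>t. 1 - t) ` {t \<in> {0..1}. f t = x}" by (rule rev_image_eqI)
    qed
    then have "{t \<in> {0..1}. revp f t = x} \<lesssim> {t \<in> {0..1}. f t = x}" by (rule subset_image_lepoll)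
    then show ?thesis using fib that lesspoll_trans1 by blast
  qed
  then show ?thesis using A pathin_revp[OF p] e
    by (auto simp: alpha_I_loop_inf_def alpha_I_map_inf_def revp_def)
qed

lemma alpha_concat:
  assumes "alpha_I_loop_inf K I X a f" "alpha_I_loop_inf K I X a g"
    and K: "infinite K" and I: "ideal_on (topspace X) I"
  shows "alpha_I_loop_inf K I X a (concat_path f g)"
proof -
  obtain A where A: "A \<in> I" and fibA: "\<forall>x \<in> topspace X - A. {t \<in> {0..1}. f t = x} \<prec> K"
    using assms(1) by (auto simp: alpha_I_loop_inf_def alpha_I_map_inf_def)
  obtain B where B: "B \<in> I" and fibB: "\<forall>x \<in> topspace X - B. {t \<in> {0..1}. g t = x} \<prec> K"
    using assms(2) by (auto simp: alpha_I_loop_inf_def alpha_I_map_inf_def)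
  have AB: "A \<union> B \<in> I" using I A B by (simp add: ideal_on_def)
  have l: "loop_at X a (concat_path f g)"
    using concat_loop[OF alpha_loop[OF assms(1)] alpha_loop[OF assms(2)]] .
  have "{t \<in> {0..1}. concat_path f g t = x} \<prec> K" if x: "x \<in> topspace X - (A \<union> B)" for x
  proof -
    let ?Ff = "{t \<in> {0..1}. f t = x}" and ?Fg = "{t \<in> {0..1}. g t = x}"
    have sub: "{t \<in> {0..1}. concat_path f g t = x} \<subseteq> (\<lambda>t. t/2) ` ?Ff \<union> (\<lambda>t. (t+1)/2) ` ?Fg"
    proof
      fix t assume t: "t \<in> {t \<in> {0..1}. concat_path f g t = x}"
      show "t \<in> (\<lambda>t. t/2) ` ?Ff \<union> (\<lambda>t. (t+1)/2) ` ?Fg"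
      proof (cases "t \<le> 1/2")
        case True
        then have "2*t \<in> ?Ff" "t = (2*t)/2" using t by (auto simp: concat_path_def)
        then show ?thesis by (blast intro: rev_image_eqI)
      next
        case False
        then have "2*t-1 \<in> ?Fg" "t = ((2*t-1)+1)/2" using t by (auto simp: concat_path_def)
        then show ?thesis by (blast intro: rev_image_eqI)
      qed
    qed
    have "(\<lambda>t. t/2) ` ?Ff \<prec> K" using fibA x image_lepoll lesspoll_trans1 by blast
    moreover have "(\<lambda>t. (t+1)/2) ` ?Fg \<prec> K" using fibB x image_lepoll lesspoll_trans1 by blast
    ultimately have "(\<lambda>t. t/2) ` ?Ff \<union> (\<lambda>t. (t+1)/2) ` ?Fg \<prec> K"
      using Un_lesspoll_infinite[OF K] by blast
    then show ?thesis using sub subset_imp_lepoll lesspoll_trans1 by blast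
  qed
  then show ?thesis using AB l
    unfolding alpha_I_loop_inf_def alpha_I_map_inf_def loop_at_def by blast
qed

theorem theorem3p3:
  fixes X :: "'a topology" and a :: 'a and I :: "'a set set" and K :: "'k set"
  assumes "Hausdorff_space X" and "locally_compact_space X" and "arc_connected_space X"
    and "\<exists>p \<in> topspace X. \<exists>q \<in> topspace X. p \<noteq> q"
    and "a \<in> topspace X"
    and "ideal_on (topspace X) I"
    and "infinite K"
  shows "P_alpha_I K I X a = {loop_class X a f | f. alpha_I_loop_inf K I X a f}"
proof -
  let ?G = "fundamental_group X a"
  let ?S = "{loop_class X a f | f. alpha_I_loop_inf K I X a f}"
  note a = assms(5) and I = assms(6) and K = assms(7)
  have empty: "{} \<in> I" using I unfolding ideal_on_def by blast
  obtain q where q: "q \<in> topspace X" "q \<noteq> a" using assms(4) by metis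
  obtain h where h: "pathin X h" "inj_on h {0..1}" "h 0 = a" "h 1 = q"
    using assms(3) a q unfolding arc_connected_space_def by metis
  let ?l = "concat_path h (revp h)"
  have hl: "hp X a ?l (\<lambda>t. a)" using rinv[OF h(1) h(3)] .
  have leq: "?l = h \<circ> (\<lambda>t. min (2*t) (2-2*t))"
    by (auto simp: concat_path_def revp_def min_def)
  have al: "alpha_I_loop_inf K I X a ?l"
  proof -
    have "{t \<in> {0..1}. ?l t = x} \<prec> K" for x
      using finite_lesspoll_infinite[OF K tent_fibre_finite[OF h(2), of x]] leq by simp
    then show ?thesis using hp_loop[OF hl] empty
      unfolding alpha_I_loop_inf_def alpha_I_map_inf_def loop_at_def by blast
  qed
  have oneq: "\<one>\<^bsub>?G\<^esub> = loop_class X a ?l"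
    using C1[OF hl] by (simp add: fundamental_group_def)
  have oneS: "\<one>\<^bsub>?G\<^esub> \<in> ?S"
  proof (rule CollectI, rule exI[of _ ?l], rule conjI)
    show "\<one>\<^bsub>?G\<^esub> = loop_class X a ?l" by (rule oneq)
    show "alpha_I_loop_inf K I X a ?l" by (rule al)
  qed
  have "generate ?G ?S \<subseteq> ?S"
  proof
    fix x assume "x \<in> generate ?G ?S"
    then show "x \<in> ?S"
    proof (induction rule: generate.induct)
      case one
      show ?case by (rule oneS)
    next
      case (incl h)
      then show ?case .
    next
      case (inv y)
      then obtain f where f: "alpha_I_loop_inf K I X a f" "y = loop_class X a f" by blast
      then have "inv\<^bsub>?G\<^esub> y = loop_class X a (revp f)" using inv_class[OF alpha_loop[OF f(1)] a] by simp
      then show ?case using alpha_revp[OF f(1)] by blast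
    next
      case (eng y1 y2)
      then obtain f g where f: "alpha_I_loop_inf K I X a f" "y1 = loop_class X a f"
        and g: "alpha_I_loop_inf K I X a g" "y2 = loop_class X a g" by blast
      then have "y1 \<otimes>\<^bsub>?G\<^esub> y2 = loop_class X a (concat_path f g)"
        using M[OF alpha_loop[OF f(1)] alpha_loop[OF g(1)]] by simp
      then show ?case using alpha_concat[OF f(1) g(1) K I] by blast
    qed
  qed
  moreover have "?S \<subseteq> generate ?G ?S" by (auto intro: generate.incl)
  ultimately show ?thesis unfolding P_alpha_I_def by blast
qed

end
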